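(* Let $G=G_1\times G_2$ be a product of commutative groups, $f_1\in\ell^1(G_1)$, $f_2\in\ell^1(G_2)$ nonnegative, and define $f\in\ell^1(G)$ by $f(x,y)=f_1(x)f_2(y)$. Let $1<p<\infty$. Then \[ \gamma_p(f)=\gamma_p(f_1)\gamma_p(f_2),\qquad \gamma'(f)\le\gamma'(f_1)\gamma'(f_2),\qquad \gamma''(f)\le\gamma''(f_1)\gamma''(f_2), \] each functional being computed in the group on which its argument lives.
   Context: For nonnegative functions $f,g$ on a commutative group $K$, $(f\star g)(x)=\max_t f(t)g(x-t)$ (max-convolution). The distribution function of $f$ is $F(t)=|\{x:f(x)\ge t\}|$ for $t>0$, and $g\sim h$ means $g,h$ have the same distribution function. For nonnegative $f\in\ell^1(K)$, $1/p+1/q=1$, and $g,h$ ranging over nonzero nonnegative functions in $\ell^1(K)$: $\gamma_p(f)=\inf_{g,h}\frac{\|f\star g\star h\|_1}{\|g\|_p\|h\|_q}$; $\gamma'(f)=\inf_{g\sim h}\frac{\|f\star g\star h\|_1}{\|g\|_2\|h\|_2}$; $\gamma''(f)=\inf_g\frac{\|f\star g\star g\|_1}{\|g\|_2^2}$. *)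

theory Defs
  imports "HOL-Analysis.Analysis"
begin

definition nonneg_l1 :: "('a \<Rightarrow> real) \<Rightarrow> bool" where
  "nonneg_l1 f \<longleftrightarrow> (\<forall>x. 0 \<le> f x) \<and> f summable_on UNIV"

text \<open>Max-convolution (f * g)(x) = max_t f(t) g(x - t); for nonnegative ell^1
  functions the maximum is attained, so it equals the supremum.\<close>
definition maxconv :: "('a::ab_group_add \<Rightarrow> real) \<Rightarrow> ('a \<Rightarrow> real) \<Rightarrow> 'a \<Rightarrow> real"
  (infixl "\<star>" 70) where
  "(f \<star> g) x = (SUP t. f t * g (x - t))"

definition l1norm :: "('a \<Rightarrow> real) \<Rightarrow> real" where
  "l1norm f = (\<Sum>\<^sub>\<infinity>x. \<bar>f x\<bar>)"

definition lpnorm :: "real \<Rightarrow> ('a \<Rightarrow> real) \<Rightarrow> real" where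
  "lpnorm p f = (\<Sum>\<^sub>\<infinity>x. \<bar>f x\<bar> powr p) powr (1 / p)"

definition distfun :: "('a \<Rightarrow> real) \<Rightarrow> real \<Rightarrow> nat" where
  "distfun f t = card {x. t \<le> f x}"

definition equidist :: "('a \<Rightarrow> real) \<Rightarrow> ('a \<Rightarrow> real) \<Rightarrow> bool" where
  "equidist g h \<longleftrightarrow> (\<forall>t>0. distfun g t = distfun h t)"

definition conj_exp :: "real \<Rightarrow> real" where
  "conj_exp p = p / (p - 1)"

definition gamma_p :: "real \<Rightarrow> ('a::ab_group_add \<Rightarrow> real) \<Rightarrow> real" where
  "gamma_p p f = Inf {l1norm ((f \<star> g) \<star> h) / (lpnorm p g * lpnorm (conj_exp p) h) | g h.
      nonneg_l1 g \<and> nonneg_l1 h \<and> g \<noteq> (\<lambda>_. 0) \<and> h \<noteq> (\<lambda>_. 0)}"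

definition gamma' :: "('a::ab_group_add \<Rightarrow> real) \<Rightarrow> real" where
  "gamma' f = Inf {l1norm ((f \<star> g) \<star> h) / (lpnorm 2 g * lpnorm 2 h) | g h.
      nonneg_l1 g \<and> nonneg_l1 h \<and> g \<noteq> (\<lambda>_. 0) \<and> h \<noteq> (\<lambda>_. 0) \<and> equidist g h}"

definition gamma'' :: "('a::ab_group_add \<Rightarrow> real) \<Rightarrow> real" where
  "gamma'' f = Inf {l1norm ((f \<star> g) \<star> g) / (lpnorm 2 g)\<^sup>2 | g.
      nonneg_l1 g \<and> g \<noteq> (\<lambda>_. 0)}"

end

theory Submission imports Defs begin

lemma l1_nonneg: "nonneg_l1 f \<Longrightarrow> 0 \<le> f x" by (simp add: nonneg_l1_def)
lemma l1_summable: "nonneg_l1 f \<Longrightarrow> f summable_on UNIV" by (simp add: nonneg_l1_def)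

lemma l1_le_sum: assumes "nonneg_l1 f" shows "f x \<le> infsum f UNIV"
  using finite_sum_le_infsum[of f UNIV "{x}"] assms by (auto simp: nonneg_l1_def)

lemma maxconv_bdd: assumes "nonneg_l1 f" "nonneg_l1 g"
  shows "bdd_above (range (\<lambda>t. f t * g (x - t)))"
proof (rule bdd_aboveI2)
  fix t show "f t * g (x - t) \<le> infsum f UNIV * infsum g UNIV"
    by (intro mult_mono l1_le_sum assms) (auto intro: l1_nonneg assms infsum_nonneg simp: nonneg_l1_def)
qed

lemma maxconv_ge: assumes "nonneg_l1 f" "nonneg_l1 g"
  shows "f t * g (x - t) \<le> (f \<star> g) x"
  unfolding maxconv_def by (rule cSUP_upper[OF _ maxconv_bdd[OF assms]]) auto

lemma maxconv_nonneg: assumes "nonneg_l1 f" "nonneg_l1 g"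
  shows "0 \<le> (f \<star> g) x"
  by (rule order_trans[OF _ maxconv_ge[OF assms, of 0]]) (use assms in \<open>auto intro!: mult_nonneg_nonneg simp: nonneg_l1_def\<close>)

lemma maxconv_le: "(\<And>t. f t * g (x - t) \<le> M) \<Longrightarrow> (f \<star> g) x \<le> M"
  unfolding maxconv_def by (rule cSUP_least) auto

lemma maxconv_mult_le:
  assumes "0 \<le> c" "\<And>t. c * (f t * g (x - t)) \<le> M"
  shows "c * (f \<star> g) x \<le> M"
proof (cases "c = 0")
  case True then show ?thesis using assms(2)[of 0] by simp
next
  case False
  then have "c > 0" using assms by simp
  have "(f \<star> g) x \<le> M / c"
    by (rule maxconv_le) (use assms(2) \<open>c > 0\<close> in \<open>simp add: pos_le_divide_eq mult.commute\<close>)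
  then show ?thesis using \<open>c > 0\<close> by (simp add: pos_le_divide_eq mult.commute)
qed

lemma tensor_summable:
  fixes u :: "'a \<Rightarrow> real" and v :: "'b \<Rightarrow> real"
  assumes "u summable_on UNIV" "v summable_on UNIV" "\<And>x. 0 \<le> u x" "\<And>y. 0 \<le> v y"
  shows "(\<lambda>(x,y). u x * v y) summable_on UNIV"
    and "infsum (\<lambda>(x,y). u x * v y) UNIV = infsum u UNIV * infsum v UNIV"
proof -
  have "(\<lambda>(x,y). u x * v y) summable_on Sigma UNIV (\<lambda>_. UNIV)"
  proof (rule summable_on_SigmaI[where g = "\<lambda>x. u x * infsum v UNIV"])
    fix x show "((\<lambda>y. (\<lambda>(x,y). u x * v y) (x, y)) has_sum u x * infsum v UNIV) UNIV"
      using has_sum_cmult_right[OF has_sum_infsum[OF assms(2)], of "u x"] by simp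
  next
    show "(\<lambda>x. u x * infsum v UNIV) summable_on UNIV"
      using summable_on_cmult_left[OF assms(1)] by simp
  qed (auto intro!: mult_nonneg_nonneg assms)
  then show S: "(\<lambda>(x,y). u x * v y) summable_on UNIV" by simp
  have "infsum (\<lambda>(x,y). u x * v y) UNIV = infsum (\<lambda>x. infsum (\<lambda>y. u x * v y) UNIV) UNIV"
    using infsum_Sigma_banach[of "\<lambda>(x,y). u x * v y" UNIV "\<lambda>_. UNIV"] S by simp
  also have "\<dots> = infsum (\<lambda>x. u x * infsum v UNIV) UNIV"
    by (simp add: infsum_cmult_right')
  also have "\<dots> = infsum u UNIV * infsum v UNIV"
    by (simp add: infsum_cmult_left')
  finally show "infsum (\<lambda>(x,y). u x * v y) UNIV = infsum u UNIV * infsum v UNIV" .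
qed

lemma maxconv_l1: fixes f g :: "'a::ab_group_add \<Rightarrow> real" assumes "nonneg_l1 f" "nonneg_l1 g" shows "nonneg_l1 (f \<star> g)"
proof -
  have T: "(\<lambda>(t,y). f t * g y) summable_on UNIV"
    by (rule tensor_summable(1)) (auto intro: assms l1_summable l1_nonneg)
  have bij: "bij_betw (\<lambda>(x::'a,t::'a). (t, x - t)) UNIV UNIV"
    by (rule bij_betw_byWitness[where f' = "\<lambda>(t,y). (y + t, t)"]) (auto simp: case_prod_beta)
  have "(\<lambda>z. (\<lambda>(t,y). f t * g y) ((\<lambda>(x,t). (t, x - t)) z)) summable_on UNIV"
    using summable_on_reindex_bij_betw[OF bij] T by blast
  then have K: "(\<lambda>(x,t). f t * g (x - t)) summable_on Sigma UNIV (\<lambda>_. UNIV)"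
    by (simp add: case_prod_beta')
  have S1: "(\<lambda>t. f t * g (x - t)) summable_on UNIV" for x
    using summable_on_SigmaD1[of "\<lambda>x t. f t * g (x - t)", OF K] by simp
  have S2: "(\<lambda>x. infsum (\<lambda>t. f t * g (x - t)) UNIV) summable_on UNIV"
    using summable_on_SigmaD[OF K[unfolded case_prod_beta]] S1 by simp
  have le: "(f \<star> g) x \<le> infsum (\<lambda>t. f t * g (x - t)) UNIV" for x
  proof (rule maxconv_le)
    fix t show "f t * g (x - t) \<le> infsum (\<lambda>t. f t * g (x - t)) UNIV"
      using finite_sum_le_infsum[OF S1[of x], of "{t}"] assms
      by (auto simp: nonneg_l1_def)
  qed
  show ?thesis unfolding nonneg_l1_def
    using summable_on_comparison_test[OF S2 le maxconv_nonneg[OF assms]] maxconv_nonneg[OF assms] by blast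
qed


lemma l1norm_nonneg_eq: "(\<And>x. 0 \<le> f x) \<Longrightarrow> l1norm f = infsum f UNIV"
  unfolding l1norm_def by simp

lemma l1norm_ge0: "0 \<le> l1norm f"
  unfolding l1norm_def by (rule infsum_nonneg) auto

lemma lpnorm_nonneg_eq: "(\<And>x. 0 \<le> f x) \<Longrightarrow> lpnorm p f = (infsum (\<lambda>x. f x powr p) UNIV) powr (1/p)"
  unfolding lpnorm_def by simp

lemma lpnorm_ge0: "0 \<le> lpnorm p f"
  unfolding lpnorm_def by simp

lemma lpnorm_zero: "lpnorm p (\<lambda>_. 0) = 0"
  unfolding lpnorm_def by simp

lemma powr_summable:
  assumes "nonneg_l1 g" "1 \<le> p"
  shows "(\<lambda>x. g x powr p) summable_on UNIV"
    and "infsum (\<lambda>x. g x powr p) UNIV \<le> infsum g UNIV powr p"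
proof -
  define B where "B = infsum g UNIV"
  have B0: "0 \<le> B" unfolding B_def using assms by (auto intro!: infsum_nonneg simp: nonneg_l1_def)
  have le: "g x powr p \<le> B powr (p - 1) * g x" for x
  proof (cases "g x = 0")
    case True then show ?thesis by simp
  next
    case False
    then have gp: "g x > 0" using l1_nonneg[OF assms(1), of x] by simp
    have "g x powr p = g x powr (p - 1) * g x"
      using gp by (simp add: powr_diff)
    also have "\<dots> \<le> B powr (p - 1) * g x"
      using gp assms l1_le_sum[OF assms(1), of x] unfolding B_def
      by (intro mult_right_mono powr_mono2) auto
    finally show ?thesis .
  qed
  have S: "(\<lambda>x. B powr (p - 1) * g x) summable_on UNIV"
    by (rule summable_on_cmult_right) (use assms in \<open>simp add: nonneg_l1_def\<close>)
  show S2: "(\<lambda>x. g x powr p) summable_on UNIV"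
    by (rule summable_on_comparison_test[OF S le]) simp
  have "infsum (\<lambda>x. g x powr p) UNIV \<le> infsum (\<lambda>x. B powr (p - 1) * g x) UNIV"
    by (rule infsum_mono[OF S2 S le])
  also have "\<dots> = B powr (p - 1) * B" unfolding B_def by (simp add: infsum_cmult_right')
  also have "\<dots> = B powr p"
  proof (cases "B = 0")
    case True then show ?thesis using assms by simp
  next
    case False then show ?thesis using B0 by (simp add: powr_diff)
  qed
  finally show "infsum (\<lambda>x. g x powr p) UNIV \<le> infsum g UNIV powr p" unfolding B_def .
qed

lemma lpnorm_le_l1:
  assumes "nonneg_l1 g" "1 \<le> p"
  shows "lpnorm p g \<le> infsum g UNIV"
proof -
  have g0: "0 \<le> g x" for x using assms by (simp add: nonneg_l1_def)
  have B0: "0 \<le> infsum g UNIV" using assms by (auto intro!: infsum_nonneg simp: nonneg_l1_def)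
  have "lpnorm p g = (infsum (\<lambda>x. g x powr p) UNIV) powr (1/p)" using g0 by (simp add: lpnorm_nonneg_eq)
  also have "\<dots> \<le> (infsum g UNIV powr p) powr (1/p)"
    using powr_summable[OF assms] assms
    by (intro powr_mono2) (auto intro!: infsum_nonneg)
  also have "\<dots> = infsum g UNIV"
    using B0 assms by (simp add: powr_powr)
  finally show ?thesis .
qed

lemma lpnorm_pos:
  assumes "nonneg_l1 g" "1 \<le> p" "g \<noteq> (\<lambda>_. 0)"
  shows "0 < lpnorm p g"
proof -
  obtain x where "g x \<noteq> 0" using assms(3) by metis
  then have gx: "g x > 0" using l1_nonneg[OF assms(1), of x] by simp
  have "g x powr p \<le> infsum (\<lambda>x. g x powr p) UNIV"
    using finite_sum_le_infsum[OF powr_summable(1)[OF assms(1,2)], of "{x}"] by simp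
  then have "0 < infsum (\<lambda>x. g x powr p) UNIV" using gx by (smt (verit) powr_gt_zero)
  then show ?thesis using l1_nonneg[OF assms(1)] by (simp add: lpnorm_nonneg_eq)
qed

definition tens :: "('a \<Rightarrow> real) \<Rightarrow> ('b \<Rightarrow> real) \<Rightarrow> 'a \<times> 'b \<Rightarrow> real" where
  "tens u v = (\<lambda>(x,y). u x * v y)"

lemma tens_apply[simp]: "tens u v (x,y) = u x * v y" by (simp add: tens_def)

lemma tens_l1:
  assumes "nonneg_l1 u" "nonneg_l1 v"
  shows "nonneg_l1 (tens u v)" and "infsum (tens u v) UNIV = infsum u UNIV * infsum v UNIV"
  using tensor_summable[of u v] assms unfolding tens_def nonneg_l1_def
  by (auto intro!: mult_nonneg_nonneg)

lemma tens_nz: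
  assumes "u \<noteq> (\<lambda>_. 0)" "v \<noteq> (\<lambda>_. 0)"
  shows "tens u v \<noteq> (\<lambda>_. 0)"
proof -
  obtain a where a: "u a \<noteq> 0" using assms(1) by metis
  obtain b where b: "v b \<noteq> 0" using assms(2) by metis
  from a b have "tens u v (a,b) \<noteq> 0" by simp
  then show ?thesis by (metis (mono_tags))
qed

lemma tens_lpnorm:
  assumes "nonneg_l1 u" "nonneg_l1 v" "1 \<le> p"
  shows "lpnorm p (tens u v) = lpnorm p u * lpnorm p v"
proof -
  have u0: "0 \<le> u x" and v0: "0 \<le> v y" for x y using assms by (auto simp: nonneg_l1_def)
  have t0: "0 \<le> tens u v z" for z using u0 v0 by (cases z) simp
  have eq: "(\<lambda>z. tens u v z powr p) = (\<lambda>(x,y). u x powr p * v y powr p)"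
    using u0 v0 by (auto simp: powr_mult)
  have "infsum (\<lambda>z. tens u v z powr p) UNIV = infsum (\<lambda>x. u x powr p) UNIV * infsum (\<lambda>y. v y powr p) UNIV"
    unfolding eq by (rule tensor_summable(2)) (use powr_summable assms in auto)
  then show ?thesis
    using t0 u0 v0
    by (simp add: lpnorm_nonneg_eq powr_mult infsum_nonneg)
qed

lemma tens_maxconv_le:
  fixes u :: "'a::ab_group_add \<times> 'b::ab_group_add \<Rightarrow> real"
  assumes "nonneg_l1 u1" "nonneg_l1 u2" "nonneg_l1 v1" "nonneg_l1 v2"
    and "\<And>a b. 0 \<le> u (a,b)" "\<And>a b. u (a,b) \<le> u1 a * u2 b"
  shows "(u \<star> tens v1 v2) (x,y) \<le> (u1 \<star> v1) x * (u2 \<star> v2) y"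
proof (rule maxconv_le)
  fix t :: "'a \<times> 'b"
  obtain t1 t2 where t: "t = (t1,t2)" by (cases t)
  have "u t * tens v1 v2 ((x,y) - t) \<le> (u1 t1 * u2 t2) * (v1 (x - t1) * v2 (y - t2))"
    unfolding t using assms l1_nonneg[OF assms(3)] l1_nonneg[OF assms(4)]
    by (auto intro!: mult_right_mono mult_nonneg_nonneg)
  also have "\<dots> = (u1 t1 * v1 (x - t1)) * (u2 t2 * v2 (y - t2))" by (simp add: ac_simps)
  also have "\<dots> \<le> (u1 \<star> v1) x * (u2 \<star> v2) y"
    using assms by (intro mult_mono maxconv_ge maxconv_nonneg) (auto intro!: mult_nonneg_nonneg intro: l1_nonneg)
  finally show "u t * tens v1 v2 ((x,y) - t) \<le> (u1 \<star> v1) x * (u2 \<star> v2) y" .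
qed

lemma tens_conv3_le:
  fixes f1 g1 h1 :: "'a::ab_group_add \<Rightarrow> real" and f2 g2 h2 :: "'b::ab_group_add \<Rightarrow> real"
  assumes "nonneg_l1 f1" "nonneg_l1 f2" "nonneg_l1 g1" "nonneg_l1 g2" "nonneg_l1 h1" "nonneg_l1 h2"
  shows "((tens f1 f2 \<star> tens g1 g2) \<star> tens h1 h2) z \<le> tens ((f1 \<star> g1) \<star> h1) ((f2 \<star> g2) \<star> h2) z"
proof -
  obtain x y where z: "z = (x,y)" by (cases z)
  have fg: "(tens f1 f2 \<star> tens g1 g2) (a,b) \<le> (f1 \<star> g1) a * (f2 \<star> g2) b" for a b
    by (rule tens_maxconv_le) (use assms in \<open>auto intro!: mult_nonneg_nonneg simp: nonneg_l1_def\<close>)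
  show ?thesis unfolding z tens_apply
    by (rule tens_maxconv_le)
      (use assms fg in \<open>auto intro!: maxconv_l1 maxconv_nonneg tens_l1\<close>)
qed


lemma conj_exp_gt1: "1 < p \<Longrightarrow> 1 < conj_exp p"
  unfolding conj_exp_def by (simp add: less_divide_eq)

definition delta0 :: "'a::zero \<Rightarrow> real" where "delta0 = (\<lambda>x. if x = 0 then 1 else 0)"

lemma delta0_l1: "nonneg_l1 delta0" "delta0 \<noteq> (\<lambda>_. 0)"
proof -
  have "finite {x\<in>UNIV. delta0 x \<noteq> 0}" unfolding delta0_def by simp
  then have "delta0 summable_on UNIV" by (rule finite_nonzero_values_imp_summable_on)
  then show "nonneg_l1 delta0" unfolding nonneg_l1_def by (auto simp: delta0_def)
  have "delta0 0 \<noteq> 0" by (simp add: delta0_def)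
  then show "delta0 \<noteq> (\<lambda>_. 0)" by metis
qed

lemma inf_prod_le:
  fixes S T :: "real set"
  assumes "S \<noteq> {}" "T \<noteq> {}" "\<And>s. s \<in> S \<Longrightarrow> 0 \<le> s" "\<And>t. t \<in> T \<Longrightarrow> 0 \<le> t"
    and "\<And>s t. s \<in> S \<Longrightarrow> t \<in> T \<Longrightarrow> a \<le> s * t"
  shows "a \<le> Inf S * Inf T"
proof -
  have IS: "0 \<le> Inf S" by (rule cInf_greatest) (use assms in auto)
  have step: "a \<le> Inf S * t" if t: "t \<in> T" for t
  proof (cases "t = 0")
    case True
    obtain s where "s \<in> S" using assms by auto
    then show ?thesis using assms(5)[OF _ t] True by fastforce
  next
    case False
    then have tp: "t > 0" using assms(4)[OF t] by simp
    have "a / t \<le> Inf S"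
      by (rule cInf_greatest) (use assms tp t in \<open>auto simp: pos_divide_le_eq\<close>)
    then show ?thesis using tp by (simp add: pos_divide_le_eq)
  qed
  show ?thesis
  proof (cases "Inf S = 0")
    case True
    obtain t where "t \<in> T" using assms by auto
    then show ?thesis using step True by fastforce
  next
    case False
    then have p: "Inf S > 0" using IS by simp
    have "a / Inf S \<le> Inf T"
      by (rule cInf_greatest) (use assms p step in \<open>auto simp: pos_divide_le_eq mult.commute\<close>)
    then show ?thesis using p by (simp add: pos_divide_le_eq mult.commute)
  qed
qed

lemma ratio_nonneg: "0 \<le> l1norm u / (lpnorm p g * lpnorm q h)"
  by (intro divide_nonneg_nonneg l1norm_ge0 mult_nonneg_nonneg lpnorm_ge0)

lemma gamma_p_le:
  assumes "nonneg_l1 g" "nonneg_l1 h" "g \<noteq> (\<lambda>_. 0)" "h \<noteq> (\<lambda>_. 0)"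
  shows "gamma_p p f \<le> l1norm ((f \<star> g) \<star> h) / (lpnorm p g * lpnorm (conj_exp p) h)"
  unfolding gamma_p_def
  by (rule cInf_lower) (use assms ratio_nonneg in \<open>blast, auto intro!: bdd_belowI[of _ 0]\<close>)

lemma gamma'_le:
  assumes "nonneg_l1 g" "nonneg_l1 h" "g \<noteq> (\<lambda>_. 0)" "h \<noteq> (\<lambda>_. 0)" "equidist g h"
  shows "gamma' f \<le> l1norm ((f \<star> g) \<star> h) / (lpnorm 2 g * lpnorm 2 h)"
  unfolding gamma'_def
  by (rule cInf_lower) (use assms ratio_nonneg in \<open>blast, auto intro!: bdd_belowI[of _ 0]\<close>)

lemma gamma''_le:
  assumes "nonneg_l1 g" "g \<noteq> (\<lambda>_. 0)"
  shows "gamma'' f \<le> l1norm ((f \<star> g) \<star> g) / (lpnorm 2 g)\<^sup>2"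
  unfolding gamma''_def
  by (rule cInf_lower) (use assms ratio_nonneg in \<open>blast, auto intro!: bdd_belowI[of _ 0] simp: power2_eq_square\<close>)

lemma gamma_p_ge0: "0 \<le> gamma_p p f"
  unfolding gamma_p_def
  by (rule cInf_greatest) (use delta0_l1 ratio_nonneg in \<open>blast, auto\<close>)

lemma gamma_p_lower:
  assumes "1 < p" "nonneg_l1 f" "nonneg_l1 g" "nonneg_l1 h"
  shows "gamma_p p f * (lpnorm p g * lpnorm (conj_exp p) h) \<le> l1norm ((f \<star> g) \<star> h)"
proof (cases "g = (\<lambda>_. 0) \<or> h = (\<lambda>_. 0)")
  case True then show ?thesis by (auto simp: lpnorm_zero l1norm_ge0)
next
  case False
  have "0 < lpnorm p g * lpnorm (conj_exp p) h"
    using False assms conj_exp_gt1[OF assms(1)] by (intro mult_pos_pos lpnorm_pos) auto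
  then show ?thesis using gamma_p_le[of g h p f] False assms by (simp add: pos_le_divide_eq)
qed


lemma tens_l1norm_le:
  fixes f1 g1 h1 :: "'a::ab_group_add \<Rightarrow> real" and f2 g2 h2 :: "'b::ab_group_add \<Rightarrow> real"
  assumes "nonneg_l1 f1" "nonneg_l1 f2" "nonneg_l1 g1" "nonneg_l1 g2" "nonneg_l1 h1" "nonneg_l1 h2"
  shows "l1norm ((tens f1 f2 \<star> tens g1 g2) \<star> tens h1 h2) \<le> l1norm ((f1 \<star> g1) \<star> h1) * l1norm ((f2 \<star> g2) \<star> h2)"
proof -
  have F: "nonneg_l1 ((tens f1 f2 \<star> tens g1 g2) \<star> tens h1 h2)"
    using assms by (intro maxconv_l1 tens_l1)
  have F1: "nonneg_l1 ((f1 \<star> g1) \<star> h1)" and F2: "nonneg_l1 ((f2 \<star> g2) \<star> h2)"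
    using assms by (auto intro!: maxconv_l1)
  have "l1norm ((tens f1 f2 \<star> tens g1 g2) \<star> tens h1 h2) = infsum ((tens f1 f2 \<star> tens g1 g2) \<star> tens h1 h2) UNIV"
    using F by (intro l1norm_nonneg_eq l1_nonneg)
  also have "\<dots> \<le> infsum (tens ((f1 \<star> g1) \<star> h1) ((f2 \<star> g2) \<star> h2)) UNIV"
    by (rule infsum_mono[OF l1_summable[OF F] l1_summable[OF tens_l1(1)[OF F1 F2]] tens_conv3_le[OF assms]])
  also have "\<dots> = l1norm ((f1 \<star> g1) \<star> h1) * l1norm ((f2 \<star> g2) \<star> h2)"
    using tens_l1(2)[OF F1 F2] F1 F2 by (simp add: l1norm_nonneg_eq l1_nonneg)
  finally show ?thesis .
qed

lemma tens_ratio_le: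
  fixes f1 g1 h1 :: "'a::ab_group_add \<Rightarrow> real" and f2 g2 h2 :: "'b::ab_group_add \<Rightarrow> real"
  assumes "nonneg_l1 f1" "nonneg_l1 f2" "nonneg_l1 g1" "nonneg_l1 g2" "nonneg_l1 h1" "nonneg_l1 h2"
    and "1 \<le> p" "1 \<le> q"
  shows "l1norm ((tens f1 f2 \<star> tens g1 g2) \<star> tens h1 h2) / (lpnorm p (tens g1 g2) * lpnorm q (tens h1 h2))
    \<le> (l1norm ((f1 \<star> g1) \<star> h1) / (lpnorm p g1 * lpnorm q h1)) * (l1norm ((f2 \<star> g2) \<star> h2) / (lpnorm p g2 * lpnorm q h2))"
proof -
  have "lpnorm p (tens g1 g2) * lpnorm q (tens h1 h2) = (lpnorm p g1 * lpnorm q h1) * (lpnorm p g2 * lpnorm q h2)"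
    using assms by (simp add: tens_lpnorm ac_simps)
  moreover have "0 \<le> (lpnorm p g1 * lpnorm q h1) * (lpnorm p g2 * lpnorm q h2)"
    by (intro mult_nonneg_nonneg lpnorm_ge0)
  ultimately show ?thesis
    using tens_l1norm_le[OF assms(1-6)]
    by (simp add: divide_right_mono)
qed

lemma gamma_p_tens_le:
  fixes f1 :: "'a::ab_group_add \<Rightarrow> real" and f2 :: "'b::ab_group_add \<Rightarrow> real"
  assumes "nonneg_l1 f1" "nonneg_l1 f2" "1 < p"
  shows "gamma_p p (tens f1 f2) \<le> gamma_p p f1 * gamma_p p f2"
proof -
  have q: "1 \<le> conj_exp p" using conj_exp_gt1[OF assms(3)] by simp
  show ?thesis unfolding gamma_p_def[of p f1] gamma_p_def[of p f2]
  proof (rule inf_prod_le)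
    fix s t
    assume "s \<in> {l1norm ((f1 \<star> g) \<star> h) / (lpnorm p g * lpnorm (conj_exp p) h) | g h.
      nonneg_l1 g \<and> nonneg_l1 h \<and> g \<noteq> (\<lambda>_. 0) \<and> h \<noteq> (\<lambda>_. 0)}"
    then obtain g1 h1 where 1: "s = l1norm ((f1 \<star> g1) \<star> h1) / (lpnorm p g1 * lpnorm (conj_exp p) h1)"
      "nonneg_l1 g1" "nonneg_l1 h1" "g1 \<noteq> (\<lambda>_. 0)" "h1 \<noteq> (\<lambda>_. 0)" by blast
    assume "t \<in> {l1norm ((f2 \<star> g) \<star> h) / (lpnorm p g * lpnorm (conj_exp p) h) | g h.
      nonneg_l1 g \<and> nonneg_l1 h \<and> g \<noteq> (\<lambda>_. 0) \<and> h \<noteq> (\<lambda>_. 0)}"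
    then obtain g2 h2 where 2: "t = l1norm ((f2 \<star> g2) \<star> h2) / (lpnorm p g2 * lpnorm (conj_exp p) h2)"
      "nonneg_l1 g2" "nonneg_l1 h2" "g2 \<noteq> (\<lambda>_. 0)" "h2 \<noteq> (\<lambda>_. 0)" by blast
    have "gamma_p p (tens f1 f2) \<le> l1norm ((tens f1 f2 \<star> tens g1 g2) \<star> tens h1 h2) / (lpnorm p (tens g1 g2) * lpnorm (conj_exp p) (tens h1 h2))"
      using 1 2 by (intro gamma_p_le tens_l1 tens_nz)
    also have "\<dots> \<le> s * t" unfolding 1(1) 2(1)
      using 1 2 assms q by (intro tens_ratio_le) auto
    finally show "gamma_p p (tens f1 f2) \<le> s * t" .
  qed (use delta0_l1 ratio_nonneg in blast)+
qed

lemma gamma''_tens_le: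
  fixes f1 :: "'a::ab_group_add \<Rightarrow> real" and f2 :: "'b::ab_group_add \<Rightarrow> real"
  assumes "nonneg_l1 f1" "nonneg_l1 f2"
  shows "gamma'' (tens f1 f2) \<le> gamma'' f1 * gamma'' f2"
proof -
  show ?thesis unfolding gamma''_def[of f1] gamma''_def[of f2]
  proof (rule inf_prod_le)
    fix s t
    assume "s \<in> {l1norm ((f1 \<star> g) \<star> g) / (lpnorm 2 g)\<^sup>2 | g. nonneg_l1 g \<and> g \<noteq> (\<lambda>_. 0)}"
    then obtain g1 where 1: "s = l1norm ((f1 \<star> g1) \<star> g1) / (lpnorm 2 g1 * lpnorm 2 g1)"
      "nonneg_l1 g1" "g1 \<noteq> (\<lambda>_. 0)" by (auto simp: power2_eq_square)
    assume "t \<in> {l1norm ((f2 \<star> g) \<star> g) / (lpnorm 2 g)\<^sup>2 | g. nonneg_l1 g \<and> g \<noteq> (\<lambda>_. 0)}"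
    then obtain g2 where 2: "t = l1norm ((f2 \<star> g2) \<star> g2) / (lpnorm 2 g2 * lpnorm 2 g2)"
      "nonneg_l1 g2" "g2 \<noteq> (\<lambda>_. 0)" by (auto simp: power2_eq_square)
    have "gamma'' (tens f1 f2) \<le> l1norm ((tens f1 f2 \<star> tens g1 g2) \<star> tens g1 g2) / (lpnorm 2 (tens g1 g2) * lpnorm 2 (tens g1 g2))"
      using gamma''_le[OF tens_l1(1)[OF 1(2) 2(2)] tens_nz[OF 1(3) 2(3)], of "tens f1 f2"] by (simp add: power2_eq_square)
    also have "\<dots> \<le> s * t" unfolding 1(1) 2(1)
      using 1 2 assms by (intro tens_ratio_le) auto
    finally show "gamma'' (tens f1 f2) \<le> s * t" .
  qed (use delta0_l1 in \<open>auto intro!: divide_nonneg_nonneg l1norm_ge0\<close>)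
qed


lemma slice_l1:
  fixes g :: "'a \<times> 'b \<Rightarrow> real"
  assumes "nonneg_l1 g" shows "nonneg_l1 (\<lambda>b. g (a,b))"
proof -
  have "(\<lambda>(x,y). g (x,y)) summable_on Sigma UNIV (\<lambda>_. UNIV)" using l1_summable[OF assms] by simp
  from summable_on_SigmaD1[of "\<lambda>x y. g (x,y)", OF this] show ?thesis
    using assms by (auto simp: nonneg_l1_def)
qed

lemma slice_sum:
  fixes g :: "'a \<times> 'b \<Rightarrow> real"
  assumes "g summable_on UNIV"
  shows "(\<lambda>a. infsum (\<lambda>b. g (a,b)) UNIV) summable_on UNIV"
    and "infsum (\<lambda>a. infsum (\<lambda>b. g (a,b)) UNIV) UNIV = infsum g UNIV"
proof -
  have S: "g summable_on Sigma UNIV (\<lambda>_. UNIV)" using assms by simp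
  have "(\<lambda>(x,y). g (x,y)) summable_on Sigma UNIV (\<lambda>_. UNIV)" using assms by simp
  from summable_on_SigmaD1[of "\<lambda>x y. g (x,y)", OF this]
  have S1: "(\<lambda>b. g (a,b)) summable_on UNIV" for a by simp
  show "(\<lambda>a. infsum (\<lambda>b. g (a,b)) UNIV) summable_on UNIV"
    using summable_on_SigmaD[OF S] S1 by simp
  show "infsum (\<lambda>a. infsum (\<lambda>b. g (a,b)) UNIV) UNIV = infsum g UNIV"
    using infsum_Sigma_banach[OF S] by simp
qed

lemma slice_lp:
  fixes g :: "'a \<times> 'b \<Rightarrow> real"
  assumes "nonneg_l1 g" "1 \<le> p"
  shows "nonneg_l1 (\<lambda>a. lpnorm p (\<lambda>b. g (a,b)))"
    and "lpnorm p (\<lambda>a. lpnorm p (\<lambda>b. g (a,b))) = lpnorm p g"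
proof -
  have g0: "0 \<le> g z" for z using l1_nonneg[OF assms(1)] .
  have SS: "(\<lambda>a. infsum (\<lambda>b. g (a,b)) UNIV) summable_on UNIV"
    by (rule slice_sum(1)[OF l1_summable[OF assms(1)]])
  have LE: "lpnorm p (\<lambda>b. g (a,b)) \<le> infsum (\<lambda>b. g (a,b)) UNIV" for a
    by (rule lpnorm_le_l1[OF slice_l1[OF assms(1)] assms(2)])
  show "nonneg_l1 (\<lambda>a. lpnorm p (\<lambda>b. g (a,b)))"
    unfolding nonneg_l1_def using summable_on_comparison_test[OF SS LE lpnorm_ge0] lpnorm_ge0 by blast
  have P: "(\<lambda>z. g z powr p) summable_on UNIV" by (rule powr_summable(1)[OF assms])
  have "lpnorm p (\<lambda>b. g (a,b)) powr p = infsum (\<lambda>b. g (a,b) powr p) UNIV" for a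
  proof -
    have "0 \<le> infsum (\<lambda>b. g (a,b) powr p) UNIV" by (rule infsum_nonneg) auto
    then show ?thesis using g0 assms(2) by (simp add: lpnorm_nonneg_eq powr_powr)
  qed
  then have "infsum (\<lambda>a. lpnorm p (\<lambda>b. g (a,b)) powr p) UNIV = infsum (\<lambda>z. g z powr p) UNIV"
    using slice_sum(2)[OF P] by simp
  then show "lpnorm p (\<lambda>a. lpnorm p (\<lambda>b. g (a,b))) = lpnorm p g"
    using g0 by (simp add: lpnorm_nonneg_eq lpnorm_ge0)
qed


lemma tens_key:
  fixes f1 :: "'a::ab_group_add \<Rightarrow> real" and f2 :: "'b::ab_group_add \<Rightarrow> real"
    and g h :: "'a \<times> 'b \<Rightarrow> real"
  assumes f1: "nonneg_l1 f1" and f2: "nonneg_l1 f2" and p: "1 < p"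
    and g: "nonneg_l1 g" and h: "nonneg_l1 h"
  shows "gamma_p p f1 * gamma_p p f2 * (lpnorm p g * lpnorm (conj_exp p) h)
     \<le> l1norm ((tens f1 f2 \<star> g) \<star> h)"
proof -
  define q where "q = conj_exp p"
  have q: "1 < q" unfolding q_def using conj_exp_gt1[OF p] .
  define \<gamma>1 where "\<gamma>1 = gamma_p p f1"
  define \<gamma>2 where "\<gamma>2 = gamma_p p f2"
  have g1: "0 \<le> \<gamma>1" "0 \<le> \<gamma>2" unfolding \<gamma>1_def \<gamma>2_def by (rule gamma_p_ge0)+
  define F where "F = (tens f1 f2 \<star> g) \<star> h"
  have F: "nonneg_l1 F" unfolding F_def using f1 f2 g h by (intro maxconv_l1 tens_l1)
  define G where "G = (\<lambda>a. lpnorm p (\<lambda>b. g (a,b)))"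
  define H where "H = (\<lambda>a. lpnorm q (\<lambda>b. h (a,b)))"
  have G: "nonneg_l1 G" "lpnorm p G = lpnorm p g" unfolding G_def using slice_lp[OF g] p by auto
  have H: "nonneg_l1 H" "lpnorm q H = lpnorm q h" unfolding H_def using slice_lp[OF h] q by auto
  define \<Phi> where "\<Phi> = (\<lambda>x. infsum (\<lambda>y. F (x,y)) UNIV)"
  have \<Phi>: "\<Phi> summable_on UNIV" "infsum \<Phi> UNIV = infsum F UNIV"
    unfolding \<Phi>_def using slice_sum[OF l1_summable[OF F]] by auto
  have F0: "0 \<le> F z" for z using l1_nonneg[OF F] .
  have hge: "0 \<le> h z" for z using l1_nonneg[OF h] .
  have f10: "0 \<le> f1 z" for z using l1_nonneg[OF f1] .
  have f20: "0 \<le> f2 z" for z using l1_nonneg[OF f2] .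
  have fg: "nonneg_l1 (tens f1 f2 \<star> g)" using f1 f2 g by (intro maxconv_l1 tens_l1)
  have v: "f1 s * ((f2 \<star> (\<lambda>b. g (s',b))) \<star> (\<lambda>b. h (x - s - s', b))) y \<le> F (x,y)" for x y s s'
  proof (rule maxconv_mult_le[OF f10])
    fix u
    have "(f1 s * h (x - s - s', y - u)) * (f2 \<star> (\<lambda>b. g (s',b))) u \<le> F (x,y)"
    proof (rule maxconv_mult_le)
      show "0 \<le> f1 s * h (x - s - s', y - u)" using f10 hge by (simp add: mult_nonneg_nonneg)
    next
      fix w
      have "(f1 s * h (x - s - s', y - u)) * (f2 w * g (s', u - w))
          = (tens f1 f2 (s,w) * g ((s + s', u) - (s,w))) * h ((x,y) - (s + s', u))"
        by (simp add: algebra_simps)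
      also have "\<dots> \<le> (tens f1 f2 \<star> g) (s + s', u) * h ((x,y) - (s + s', u))"
        by (rule mult_right_mono[OF maxconv_ge hge]) (use f1 f2 g in \<open>auto intro: tens_l1\<close>)
      also have "\<dots> \<le> F (x,y)" unfolding F_def by (rule maxconv_ge[OF fg h])
      finally show "(f1 s * h (x - s - s', y - u)) * (f2 w * g (s', u - w)) \<le> F (x,y)" .
    qed
    then show "f1 s * ((f2 \<star> (\<lambda>b. g (s',b))) u * (\<lambda>b. h (x - s - s', b)) (y - u)) \<le> F (x,y)"
      by (simp add: ac_simps)
  qed
  have vi: "f1 s * (\<gamma>2 * (G s' * H (x - s - s'))) \<le> \<Phi> x" for x s s'
  proof -
    define K where "K = (f2 \<star> (\<lambda>b. g (s',b))) \<star> (\<lambda>b. h (x - s - s', b))"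
    have K: "nonneg_l1 K" unfolding K_def using f2 slice_l1[OF g] slice_l1[OF h] by (intro maxconv_l1)
    have "\<gamma>2 * (G s' * H (x - s - s')) \<le> l1norm K"
      unfolding \<gamma>2_def G_def H_def K_def q_def
      by (rule gamma_p_lower[OF p f2 slice_l1[OF g] slice_l1[OF h]])
    also have "\<dots> = infsum K UNIV" using K by (simp add: l1norm_nonneg_eq l1_nonneg)
    finally have "f1 s * (\<gamma>2 * (G s' * H (x - s - s'))) \<le> f1 s * infsum K UNIV"
      using f10 by (simp add: mult_left_mono)
    also have "\<dots> = infsum (\<lambda>y. f1 s * K y) UNIV" by (simp add: infsum_cmult_right')
    also have "\<dots> \<le> \<Phi> x" unfolding \<Phi>_def
    proof (rule infsum_mono)
      show "(\<lambda>y. f1 s * K y) summable_on UNIV" by (rule summable_on_cmult_right[OF l1_summable[OF K]])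
      show "(\<lambda>y. F (x, y)) summable_on UNIV" by (rule l1_summable[OF slice_l1[OF F]])
      show "f1 s * K y \<le> F (x, y)" for y unfolding K_def by (rule v)
    qed
    finally show ?thesis .
  qed
  have vii: "\<gamma>2 * ((f1 \<star> G) \<star> H) x \<le> \<Phi> x" for x
  proof (rule maxconv_mult_le[OF g1(2)])
    fix u
    have "(\<gamma>2 * H (x - u)) * (f1 \<star> G) u \<le> \<Phi> x"
    proof (rule maxconv_mult_le)
      show "0 \<le> \<gamma>2 * H (x - u)" using g1 l1_nonneg[OF H(1)] by simp
    next
      fix w
      have "(\<gamma>2 * H (x - u)) * (f1 w * G (u - w)) = f1 w * (\<gamma>2 * (G (u - w) * H (x - w - (u - w))))"
        by (simp add: algebra_simps)
      also have "\<dots> \<le> \<Phi> x" by (rule vi)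
      finally show "(\<gamma>2 * H (x - u)) * (f1 w * G (u - w)) \<le> \<Phi> x" .
    qed
    then show "\<gamma>2 * ((f1 \<star> G) u * H (x - u)) \<le> \<Phi> x" by (simp add: ac_simps)
  qed
  have C: "nonneg_l1 ((f1 \<star> G) \<star> H)" using f1 G H by (intro maxconv_l1)
  have "\<gamma>1 * \<gamma>2 * (lpnorm p g * lpnorm q h) = \<gamma>2 * (\<gamma>1 * (lpnorm p G * lpnorm q H))"
    using G H by simp
  also have "\<dots> \<le> \<gamma>2 * l1norm ((f1 \<star> G) \<star> H)"
    unfolding \<gamma>1_def q_def using gamma_p_lower[OF p f1 G(1) H(1)] g1 \<gamma>1_def
    by (intro mult_left_mono) auto
  also have "\<dots> = infsum (\<lambda>x. \<gamma>2 * ((f1 \<star> G) \<star> H) x) UNIV"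
    using C by (simp add: l1norm_nonneg_eq l1_nonneg infsum_cmult_right')
  also have "\<dots> \<le> infsum \<Phi> UNIV"
    by (rule infsum_mono[OF summable_on_cmult_right[OF l1_summable[OF C]] \<Phi>(1) vii])
  also have "\<dots> = l1norm F" using \<Phi>(2) F0 by (simp add: l1norm_nonneg_eq)
  finally show ?thesis unfolding F_def \<gamma>1_def \<gamma>2_def q_def .
qed


lemma gamma_p_tens_ge:
  fixes f1 :: "'a::ab_group_add \<Rightarrow> real" and f2 :: "'b::ab_group_add \<Rightarrow> real"
  assumes "nonneg_l1 f1" "nonneg_l1 f2" "1 < p"
  shows "gamma_p p f1 * gamma_p p f2 \<le> gamma_p p (tens f1 f2)"
  unfolding gamma_p_def[of p "tens f1 f2"]
proof (rule cInf_greatest)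
  show "{l1norm ((tens f1 f2 \<star> g) \<star> h) / (lpnorm p g * lpnorm (conj_exp p) h) | g h.
      nonneg_l1 g \<and> nonneg_l1 h \<and> g \<noteq> (\<lambda>_. 0) \<and> h \<noteq> (\<lambda>_. 0)} \<noteq> {}"
    using delta0_l1 by blast
next
  fix r assume "r \<in> {l1norm ((tens f1 f2 \<star> g) \<star> h) / (lpnorm p g * lpnorm (conj_exp p) h) | g h.
      nonneg_l1 g \<and> nonneg_l1 h \<and> g \<noteq> (\<lambda>_. 0) \<and> h \<noteq> (\<lambda>_. 0)}"
  then obtain g h where r: "r = l1norm ((tens f1 f2 \<star> g) \<star> h) / (lpnorm p g * lpnorm (conj_exp p) h)"
    and gh: "nonneg_l1 g" "nonneg_l1 h" "g \<noteq> (\<lambda>_. 0)" "h \<noteq> (\<lambda>_. 0)" by blast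
  have "0 < lpnorm p g * lpnorm (conj_exp p) h"
    using gh assms conj_exp_gt1[OF assms(3)] by (intro mult_pos_pos lpnorm_pos) auto
  then show "gamma_p p f1 * gamma_p p f2 \<le> r"
    unfolding r using tens_key[OF assms gh(1,2)] by (simp add: pos_le_divide_eq)
qed

lemma superlevel_finite:
  assumes "nonneg_l1 g" "0 < t"
  shows "finite {x. t \<le> g x}"
proof (rule ccontr)
  assume inf: "infinite {x. t \<le> g x}"
  define n where "n = nat (ceiling (infsum g UNIV / t)) + 1"
  obtain B where B: "finite B" "card B = n" "B \<subseteq> {x. t \<le> g x}"
    using infinite_arbitrarily_large[OF inf] by blast
  have "real n * t = (\<Sum>x\<in>B. t)" using B by simp
  also have "\<dots> \<le> sum g B" using B by (intro sum_mono) auto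
  also have "\<dots> \<le> infsum g UNIV"
    using finite_sum_le_infsum[OF l1_summable[OF assms(1)] B(1)] l1_nonneg[OF assms(1)] by auto
  finally have "real n * t \<le> infsum g UNIV" .
  moreover have "infsum g UNIV / t < real n" unfolding n_def by linarith
  ultimately show False using assms(2) by (simp add: divide_less_eq)
qed

lemma level_card:
  assumes g: "nonneg_l1 g" and h: "nonneg_l1 h" and e: "equidist g h" and v: "0 < v"
  shows "card {x. g x = v} = card {x. h x = v}"
proof -
  define S where "S = g ` {x. v \<le> g x} \<union> h ` {x. v \<le> h x}"
  have fS: "finite S" unfolding S_def using superlevel_finite[OF g v] superlevel_finite[OF h v] by auto
  define v' where "v' = Min ({s\<in>S. v < s} \<union> {v + 1})"
  have fin': "finite ({s\<in>S. v < s} \<union> {v + 1})" using fS by auto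
  have vv': "v < v'" unfolding v'_def using fin' by (subst Min_gr_iff) auto
  have lev: "{x. v < k x} = {x. v' \<le> k x}" if "k = g \<or> k = h" for k
  proof
    show "{x. v < k x} \<subseteq> {x. v' \<le> k x}"
    proof
      fix x assume "x \<in> {x. v < k x}"
      then have "k x \<in> {s\<in>S. v < s}" unfolding S_def using that by auto
      then show "x \<in> {x. v' \<le> k x}" unfolding v'_def using fin' by (auto intro: Min_le)
    qed
    show "{x. v' \<le> k x} \<subseteq> {x. v < k x}" using vv' by auto
  qed
  have eq: "{x. k x = v} = {x. v \<le> k x} - {x. v' \<le> k x}" if "k = g \<or> k = h" for k
    using lev[OF that] by auto
  have card: "card {x. k x = v} = distfun k v - distfun k v'" if "k = g \<or> k = h" and "nonneg_l1 k" for k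
    unfolding eq[OF that(1)] distfun_def
    by (rule card_Diff_subset) (use superlevel_finite[OF that(2)] vv' v in auto)
  show ?thesis using card[of g] card[of h] g h e vv' v unfolding equidist_def by simp
qed


lemma equidist_bij:
  assumes g: "nonneg_l1 g" and h: "nonneg_l1 h" and e: "equidist g h"
  shows "\<exists>\<sigma>. bij_betw \<sigma> {x. 0 < g x} {x. 0 < h x} \<and> (\<forall>x. 0 < g x \<longrightarrow> h (\<sigma> x) = g x)"
proof -
  have fin: "finite {x. k x = v}" if "nonneg_l1 k" "0 < v" for k v
    by (rule finite_subset[OF _ superlevel_finite[OF that]]) auto
  have ex: "\<exists>\<tau>. bij_betw \<tau> {x. g x = v} {x. h x = v}" if "0 < v" for v
    by (rule finite_same_card_bij[OF fin[OF g that] fin[OF h that] level_card[OF g h e that]])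
  define \<tau> where "\<tau> v = (SOME \<tau>. bij_betw \<tau> {x. g x = v} {x. h x = v})" for v
  have \<tau>: "bij_betw (\<tau> v) {x. g x = v} {x. h x = v}" if "0 < v" for v
    unfolding \<tau>_def using someI_ex[OF ex[OF that]] .
  define \<sigma> where "\<sigma> x = \<tau> (g x) x" for x
  have val: "h (\<sigma> x) = g x" if "0 < g x" for x
    using \<tau>[OF that] unfolding \<sigma>_def bij_betw_def by auto
  have "bij_betw \<sigma> {x. 0 < g x} {x. 0 < h x}"
    unfolding bij_betw_def
  proof
    show "inj_on \<sigma> {x. 0 < g x}"
    proof (rule inj_onI)
      fix x y assume x: "x \<in> {x. 0 < g x}" and y: "y \<in> {x. 0 < g x}" and xy: "\<sigma> x = \<sigma> y"
      have gxy: "g x = g y" using val x y xy by (metis mem_Collect_eq)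
      have "inj_on (\<tau> (g x)) {z. g z = g x}" using \<tau> x unfolding bij_betw_def by auto
      then show "x = y" using xy gxy unfolding \<sigma>_def by (auto dest: inj_onD)
    qed
    show "\<sigma> ` {x. 0 < g x} = {x. 0 < h x}"
    proof
      show "\<sigma> ` {x. 0 < g x} \<subseteq> {x. 0 < h x}" using val by auto
      show "{x. 0 < h x} \<subseteq> \<sigma> ` {x. 0 < g x}"
      proof
        fix z assume z: "z \<in> {x. 0 < h x}"
        then have "z \<in> \<tau> (h z) ` {x. g x = h z}" using \<tau>[of "h z"] unfolding bij_betw_def by auto
        then obtain x where "g x = h z" "z = \<tau> (h z) x" by auto
        then show "z \<in> \<sigma> ` {x. 0 < g x}" using z unfolding \<sigma>_def by (intro image_eqI[where x=x]) auto
      qed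
    qed
  qed
  then show ?thesis using val by blast
qed

lemma pos_of_prod:
  fixes u :: "'a \<Rightarrow> real" and v :: "'b \<Rightarrow> real"
  assumes "t \<le> u a * v b" "nonneg_l1 u" "nonneg_l1 v" "0 < t"
  shows "0 < u a \<and> 0 < v b"
proof -
  have "0 \<le> u a" "0 \<le> v b" using assms(2,3) by (auto simp: nonneg_l1_def)
  moreover have "0 < u a * v b" using assms by linarith
  ultimately show ?thesis by (metis less_eq_real_def mult_zero_left mult_zero_right)
qed

lemma equidist_tens:
  assumes "nonneg_l1 g1" "nonneg_l1 h1" "equidist g1 h1"
    and "nonneg_l1 g2" "nonneg_l1 h2" "equidist g2 h2"
  shows "equidist (tens g1 g2) (tens h1 h2)"
  unfolding equidist_def distfun_def
proof (intro allI impI)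
  fix t :: real assume t: "0 < t"
  obtain \<sigma>1 where s1: "bij_betw \<sigma>1 {x. 0 < g1 x} {x. 0 < h1 x}" "\<And>x. 0 < g1 x \<Longrightarrow> h1 (\<sigma>1 x) = g1 x"
    using equidist_bij[OF assms(1-3)] by blast
  obtain \<sigma>2 where s2: "bij_betw \<sigma>2 {x. 0 < g2 x} {x. 0 < h2 x}" "\<And>x. 0 < g2 x \<Longrightarrow> h2 (\<sigma>2 x) = g2 x"
    using equidist_bij[OF assms(4-6)] by blast
  have B: "bij_betw (map_prod \<sigma>1 \<sigma>2) ({x. 0 < g1 x} \<times> {x. 0 < g2 x}) ({x. 0 < h1 x} \<times> {x. 0 < h2 x})"
    by (rule bij_betw_map_prod[OF s1(1) s2(1)])
  have sub: "{z. t \<le> tens g1 g2 z} \<subseteq> {x. 0 < g1 x} \<times> {x. 0 < g2 x}"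
    using pos_of_prod[OF _ assms(1,4) t] by auto
  have img: "map_prod \<sigma>1 \<sigma>2 ` {z. t \<le> tens g1 g2 z} = {z. t \<le> tens h1 h2 z}"
  proof
    show "map_prod \<sigma>1 \<sigma>2 ` {z. t \<le> tens g1 g2 z} \<subseteq> {z. t \<le> tens h1 h2 z}"
    proof
      fix w assume "w \<in> map_prod \<sigma>1 \<sigma>2 ` {z. t \<le> tens g1 g2 z}"
      then obtain a b where ab: "w = (\<sigma>1 a, \<sigma>2 b)" "t \<le> g1 a * g2 b" by auto
      then have "0 < g1 a" "0 < g2 b" using pos_of_prod[OF _ assms(1,4) t] by auto
      then show "w \<in> {z. t \<le> tens h1 h2 z}" using ab s1(2) s2(2) by auto
    qed
    show "{z. t \<le> tens h1 h2 z} \<subseteq> map_prod \<sigma>1 \<sigma>2 ` {z. t \<le> tens g1 g2 z}"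
    proof
      fix w assume w: "w \<in> {z. t \<le> tens h1 h2 z}"
      obtain c d where cd: "w = (c,d)" by (cases w)
      have "0 < h1 c" "0 < h2 d" using pos_of_prod[OF _ assms(2,5) t] w cd by auto
      then have "(c,d) \<in> map_prod \<sigma>1 \<sigma>2 ` ({x. 0 < g1 x} \<times> {x. 0 < g2 x})"
        using B unfolding bij_betw_def by auto
      then obtain a b where ab: "0 < g1 a" "0 < g2 b" "c = \<sigma>1 a" "d = \<sigma>2 b" by auto
      then have "tens g1 g2 (a,b) = tens h1 h2 (c,d)" using s1(2) s2(2) by simp
      then show "w \<in> map_prod \<sigma>1 \<sigma>2 ` {z. t \<le> tens g1 g2 z}" using w cd ab by force
    qed
  qed
  show "card {z. t \<le> tens g1 g2 z} = card {z. t \<le> tens h1 h2 z}"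
    by (rule bij_betw_same_card[OF bij_betw_subset[OF B sub img]])
qed


lemma gamma'_tens_le:
  fixes f1 :: "'a::ab_group_add \<Rightarrow> real" and f2 :: "'b::ab_group_add \<Rightarrow> real"
  assumes "nonneg_l1 f1" "nonneg_l1 f2"
  shows "gamma' (tens f1 f2) \<le> gamma' f1 * gamma' f2"
proof -
  show ?thesis unfolding gamma'_def[of f1] gamma'_def[of f2]
  proof (rule inf_prod_le)
    fix s t
    assume "s \<in> {l1norm ((f1 \<star> g) \<star> h) / (lpnorm 2 g * lpnorm 2 h) | g h.
      nonneg_l1 g \<and> nonneg_l1 h \<and> g \<noteq> (\<lambda>_. 0) \<and> h \<noteq> (\<lambda>_. 0) \<and> equidist g h}"
    then obtain g1 h1 where 1: "s = l1norm ((f1 \<star> g1) \<star> h1) / (lpnorm 2 g1 * lpnorm 2 h1)"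
      "nonneg_l1 g1" "nonneg_l1 h1" "g1 \<noteq> (\<lambda>_. 0)" "h1 \<noteq> (\<lambda>_. 0)" "equidist g1 h1" by blast
    assume "t \<in> {l1norm ((f2 \<star> g) \<star> h) / (lpnorm 2 g * lpnorm 2 h) | g h.
      nonneg_l1 g \<and> nonneg_l1 h \<and> g \<noteq> (\<lambda>_. 0) \<and> h \<noteq> (\<lambda>_. 0) \<and> equidist g h}"
    then obtain g2 h2 where 2: "t = l1norm ((f2 \<star> g2) \<star> h2) / (lpnorm 2 g2 * lpnorm 2 h2)"
      "nonneg_l1 g2" "nonneg_l1 h2" "g2 \<noteq> (\<lambda>_. 0)" "h2 \<noteq> (\<lambda>_. 0)" "equidist g2 h2" by blast
    have "gamma' (tens f1 f2) \<le> l1norm ((tens f1 f2 \<star> tens g1 g2) \<star> tens h1 h2) / (lpnorm 2 (tens g1 g2) * lpnorm 2 (tens h1 h2))"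
      using 1 2 by (intro gamma'_le tens_l1 tens_nz equidist_tens)
    also have "\<dots> \<le> s * t" unfolding 1(1) 2(1)
      using 1 2 assms by (intro tens_ratio_le) auto
    finally show "gamma' (tens f1 f2) \<le> s * t" .
  next
    have "equidist (delta0::'a \<Rightarrow> real) delta0" by (simp add: equidist_def)
    then show "{l1norm ((f1 \<star> g) \<star> h) / (lpnorm 2 g * lpnorm 2 h) | g h.
      nonneg_l1 g \<and> nonneg_l1 h \<and> g \<noteq> (\<lambda>_. 0) \<and> h \<noteq> (\<lambda>_. 0) \<and> equidist g h} \<noteq> {}"
      using delta0_l1 by blast
  next
    have "equidist (delta0::'b \<Rightarrow> real) delta0" by (simp add: equidist_def)
    then show "{l1norm ((f2 \<star> g) \<star> h) / (lpnorm 2 g * lpnorm 2 h) | g h.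
      nonneg_l1 g \<and> nonneg_l1 h \<and> g \<noteq> (\<lambda>_. 0) \<and> h \<noteq> (\<lambda>_. 0) \<and> equidist g h} \<noteq> {}"
      using delta0_l1 by blast
  qed (use ratio_nonneg in blast)+
qed

theorem mainTheorem11:
  fixes f1 :: "'a::ab_group_add \<Rightarrow> real" and f2 :: "'b::ab_group_add \<Rightarrow> real"
    and f :: "'a \<times> 'b \<Rightarrow> real" and p :: real
  assumes "nonneg_l1 f1" and "nonneg_l1 f2"
    and "\<And>x y. f (x, y) = f1 x * f2 y"
    and "1 < p"
  shows "gamma_p p f = gamma_p p f1 * gamma_p p f2 \<and>
         gamma' f \<le> gamma' f1 * gamma' f2 \<and>
         gamma'' f \<le> gamma'' f1 * gamma'' f2"
proof -
  have f: "f = tens f1 f2" using assms(3) by (auto simp: tens_def)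
  show ?thesis unfolding f
    using gamma_p_tens_le[OF assms(1,2,4)] gamma_p_tens_ge[OF assms(1,2,4)]
      gamma'_tens_le[OF assms(1,2)] gamma''_tens_le[OF assms(1,2)] by linarith
qed

end
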